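(* A PAF $\psi:\mathcal{P}^N\to\mathcal{P}$ is Level-SP if and only if there exist, for every coalition $S\subseteq N$, a weakly increasing, right-continuous function $f_S:\Lambda\to[0,1]$ such that: (1) for all $S\subseteq S'\subseteq N$ and all $a\in\Lambda$, $f_S(a)\le f_{S'}(a)$; (2) if $\sup\Lambda\notin\Lambda$ then $\lim_{a\to\sup\Lambda}f_N(a)=1$, and otherwise $f_N(\sup\Lambda)=1$; (3) if $\inf\Lambda\notin\Lambda$ then $\lim_{a\to\inf\Lambda}f_\emptyset(a)=0$; (4) the CAF $\Psi$ associated with $\psi$ satisfies, for all $\mathbf P\in\mathcal C^N$ and all $a\in\Lambda$, $$\Psi(\mathbf P)(a)=\max_{S\subseteq N}\min\Big(f_S(a),\min_{i\in S}P_i(a)\Big)$$ (with the convention that the minimum over the empty set equals $1$). Moreover, $\psi$ is unanimous if and only if such functions can be chosen with $f_\emptyset(a)=0$ and $f_N(a)=1$ for all $a\in\Lambda$.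
   Context: Let $N=\{1,\dots,n\}$ be a finite set of experts and $\Lambda\subseteq\mathbb R$ a nonempty Borel set with the usual order. $\mathcal P$ denotes the set of Borel probability measures on $\Lambda$ and $\mathcal C$ the set of cumulative distribution functions (CDFs) on $\Lambda$; the map $\pi:\mathcal P\to\mathcal C$ is $\pi(p)(a)=p(\{x\in\Lambda:x\le a\})$. A probability aggregation function (PAF) is a map $\psi:\mathcal P^N\to\mathcal P$; its associated cumulative aggregation function (CAF) $\Psi:\mathcal C^N\to\mathcal C$ is defined by $\Psi(\pi(p_1),\dots,\pi(p_n))=\pi(\psi(p_1,\dots,p_n))$. We write $P_i=\pi(p_i)$ and $\mathbf P=(P_1,\dots,P_n)$. For a profile $\mathbf z$, $\mathbf z_{-i}(z_i')$ denotes the profile obtained from $\mathbf z$ by replacing its $i$-th coordinate by $z_i'$. The PAF $\psi$ is level-strategyproof (Level-SP) if for every $i\in N$, every $\mathbf P\in\mathcal C^N$, every $P_i'\in\mathcal C$ and every $a\in\Lambda$: if $P_i(a)<\Psi(\mathbf P)(a)$ then $\Psi(\mathbf P)(a)\le\Psi(\mathbf P_{-i}(P_i'))(a)$, and if $P_i(a)>\Psi(\mathbf P)(a)$ then $\Psi(\mathbf P)(a)\ge\Psi(\mathbf P_{-i}(P_i'))(a)$. $\psi$ is unanimous if $\psi(p,\dots,p)=p$ for all $p\in\mathcal P$. *)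

theory Defs
  imports "HOL-Probability.Probability"
begin

definition probs :: "real set \<Rightarrow> real measure set" where
  "probs L = {M. sets M = sets (restrict_space borel L) \<and> prob_space M}"

definition cdfL :: "real set \<Rightarrow> real measure \<Rightarrow> real \<Rightarrow> real" where
  "cdfL L M a = measure M {x \<in> L. x \<le> a}"

definition profiles :: "real set \<Rightarrow> ('n \<Rightarrow> real measure) set" where
  "profiles L = {p. \<forall>i. p i \<in> probs L}"

definition is_PAF :: "real set \<Rightarrow> (('n \<Rightarrow> real measure) \<Rightarrow> real measure) \<Rightarrow> bool" where
  "is_PAF L psi \<longleftrightarrow> (\<forall>p \<in> profiles L. psi p \<in> probs L)"

text \<open>Level strategy-proofness, stated via the CAF Psi(pi p) = pi(psi p).\<close>
definition level_SP :: "real set \<Rightarrow> (('n \<Rightarrow> real measure) \<Rightarrow> real measure) \<Rightarrow> bool" where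
  "level_SP L psi \<longleftrightarrow>
     (\<forall>i. \<forall>p \<in> profiles L. \<forall>q \<in> probs L. \<forall>a \<in> L.
        (cdfL L (p i) a < cdfL L (psi p) a \<longrightarrow> cdfL L (psi p) a \<le> cdfL L (psi (p(i := q))) a) \<and>
        (cdfL L (p i) a > cdfL L (psi p) a \<longrightarrow> cdfL L (psi p) a \<ge> cdfL L (psi (p(i := q))) a))"

definition unanimous :: "real set \<Rightarrow> (('n \<Rightarrow> real measure) \<Rightarrow> real measure) \<Rightarrow> bool" where
  "unanimous L psi \<longleftrightarrow> (\<forall>p \<in> probs L. psi (\<lambda>_. p) = p)"

definition min_coal :: "real set \<Rightarrow> ('n \<Rightarrow> real measure) \<Rightarrow> 'n set \<Rightarrow> real \<Rightarrow> real" where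
  "min_coal L p S a = (if S = {} then 1 else Min ((\<lambda>i. cdfL L (p i) a) ` S))"

definition to_sup :: "real set \<Rightarrow> real filter" where
  "to_sup L = (if bdd_above L then at (Sup L) within L else inf at_top (principal L))"

definition to_inf :: "real set \<Rightarrow> real filter" where
  "to_inf L = (if bdd_below L then at (Inf L) within L else inf at_bot (principal L))"

definition sup_in :: "real set \<Rightarrow> bool" where
  "sup_in L \<longleftrightarrow> bdd_above L \<and> Sup L \<in> L"

definition inf_in :: "real set \<Rightarrow> bool" where
  "inf_in L \<longleftrightarrow> bdd_below L \<and> Inf L \<in> L"

text \<open>Conditions on the family f_S (S ranges over all coalitions, i.e. subsets of the expert type).\<close>
definition admissible_family :: "real set \<Rightarrow> ('n set \<Rightarrow> real \<Rightarrow> real) \<Rightarrow> bool" where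
  "admissible_family L f \<longleftrightarrow>
     (\<forall>S. mono_on L (f S)
        \<and> (\<forall>a \<in> L. (f S \<longlongrightarrow> f S a) (at a within (L \<inter> {a<..})))
        \<and> (\<forall>a \<in> L. 0 \<le> f S a \<and> f S a \<le> 1))
   \<and> (\<forall>S S'. S \<subseteq> S' \<longrightarrow> (\<forall>a \<in> L. f S a \<le> f S' a))
   \<and> (if sup_in L then f UNIV (Sup L) = 1 else (f UNIV \<longlongrightarrow> 1) (to_sup L))
   \<and> (\<not> inf_in L \<longrightarrow> (f {} \<longlongrightarrow> 0) (to_inf L))"

definition represents :: "real set \<Rightarrow> (('n::finite \<Rightarrow> real measure) \<Rightarrow> real measure)
    \<Rightarrow> ('n set \<Rightarrow> real \<Rightarrow> real) \<Rightarrow> bool" where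
  "represents L psi f \<longleftrightarrow>
     (\<forall>p \<in> profiles L. \<forall>a \<in> L.
        cdfL L (psi p) a = Max ((\<lambda>S. min (f S a) (min_coal L p S a)) ` UNIV))"

end

theory Submission
  imports Defs
begin


abbreviation DD :: "real measure \<Rightarrow> real measure" where "DD M \<equiv> distr M borel (\<lambda>x. x)"

lemma probs_sets: "M \<in> probs L \<Longrightarrow> sets M = sets (restrict_space borel L)"
  by (simp add: probs_def)
lemma probs_space: "M \<in> probs L \<Longrightarrow> space M = L"
  using sets_eq_imp_space_eq[OF probs_sets] by (simp add: space_restrict_space)
lemma probs_prob: "M \<in> probs L \<Longrightarrow> prob_space M"
  by (simp add: probs_def)

lemma probs_meas: assumes "M \<in> probs L" shows "(\<lambda>x. x) \<in> borel_measurable M"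
proof -
  have "(\<lambda>x. x) \<in> borel_measurable (restrict_space borel L)"
    by (rule measurable_restrict_space1) simp
  then show ?thesis using measurable_cong_sets[OF probs_sets[OF assms] refl] by blast
qed

lemma realD: "M \<in> probs L \<Longrightarrow> real_distribution (DD M)"
  using prob_space.real_distribution_distr[OF probs_prob probs_meas] by blast

lemma cdfL_D: assumes "M \<in> probs L" shows "cdfL L M x = cdf (DD M) x"
proof -
  have "cdf (DD M) x = measure M ((\<lambda>x. x) -` {..x} \<inter> space M)"
    unfolding cdf_def by (rule measure_distr[OF probs_meas[OF assms]]) simp
  also have "(\<lambda>x. x) -` {..x} \<inter> space M = {y\<in>L. y \<le> x}" using probs_space[OF assms] by auto
  finally show ?thesis by (simp add: cdfL_def)
qed

lemma DD_lt: assumes "M \<in> probs L" shows "measure (DD M) {..<x} = measure M {y\<in>L. y < x}"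
proof -
  have "measure (DD M) {..<x} = measure M ((\<lambda>x. x) -` {..<x} \<inter> space M)"
    by (rule measure_distr[OF probs_meas[OF assms]]) simp
  also have "(\<lambda>x. x) -` {..<x} \<inter> space M = {y\<in>L. y < x}" using probs_space[OF assms] by auto
  finally show ?thesis .
qed

lemma cdfL_mono: "M \<in> probs L \<Longrightarrow> x \<le> y \<Longrightarrow> cdfL L M x \<le> cdfL L M y"
  using finite_borel_measure.cdf_nondecreasing[OF real_distribution.finite_borel_measure_M[OF realD]]
  by (simp add: cdfL_D)
lemma cdfL_ge0: "M \<in> probs L \<Longrightarrow> 0 \<le> cdfL L M x"
  by (simp add: cdfL_def)
lemma cdfL_le1: "M \<in> probs L \<Longrightarrow> cdfL L M x \<le> 1"
  using real_distribution.cdf_bounded_prob[OF realD] by (simp add: cdfL_D)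

lemma cdfL_max: assumes "M \<in> probs L" "\<forall>b\<in>L. b \<le> x" shows "cdfL L M x = 1"
proof -
  have "{y\<in>L. y \<le> x} = space M" using assms probs_space[OF assms(1)] by auto
  then show ?thesis using prob_space.prob_space[OF probs_prob[OF assms(1)]] by (simp add: cdfL_def)
qed

lemma cdfL_rc: assumes "M \<in> probs L" and that: "S \<subseteq> {a<..}"
  shows "(cdfL L M \<longlongrightarrow> cdfL L M a) (at a within S)"
proof -
  have "(cdf (DD M) \<longlongrightarrow> cdf (DD M) a) (at_right a)"
    using finite_borel_measure.cdf_is_right_cont[OF real_distribution.finite_borel_measure_M[OF realD[OF assms(1)]]]
    by (simp add: continuous_within)
  then have "(cdf (DD M) \<longlongrightarrow> cdf (DD M) a) (at a within S)"
    using tendsto_within_subset that by blast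
  moreover have "cdfL L M = cdf (DD M)" using cdfL_D[OF assms(1)] by auto
  ultimately show ?thesis by simp
qed



definition dl :: "real set \<Rightarrow> real \<Rightarrow> real measure" where
  "dl L x = return (restrict_space borel L) x"

lemma dl_probs: "x \<in> L \<Longrightarrow> dl L x \<in> probs L"
  unfolding probs_def dl_def by (auto intro!: prob_space_return simp: space_restrict_space)

lemma cdf_dl: assumes "x \<in> L" shows "cdfL L (dl L x) a = (if x \<le> a then 1 else 0)"
proof -
  have "{y\<in>L. y \<le> a} = L \<inter> {..a}" by auto
  then have "{y\<in>L. y \<le> a} \<in> sets (restrict_space borel L)"
    by (simp add: sets_restrict_space)
  then show ?thesis using assms unfolding cdfL_def dl_def
    by (simp add: measure_return)
qed

lemma cdf_to_sup: assumes "M \<in> probs L" "\<not> sup_in L"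
  shows "(cdfL L M \<longlongrightarrow> 1) (to_sup L)"
proof (cases "bdd_above L")
  case True
  define s where "s = Sup L"
  have sL: "s \<notin> L" using assms True by (simp add: sup_in_def s_def)
  have Ls: "L \<subseteq> {..<s}"
  proof
    fix y assume "y \<in> L" then show "y \<in> {..<s}" using True sL cSup_upper[of y L] s_def
      by (cases "y = s") auto
  qed
  have "(cdf (DD M) \<longlongrightarrow> measure (DD M) {..<s}) (at_left s)"
    using finite_borel_measure.cdf_at_left[OF real_distribution.finite_borel_measure_M[OF realD[OF assms(1)]]] .
  moreover have "measure (DD M) {..<s} = 1"
  proof -
    have "{y\<in>L. y < s} = space M" using Ls probs_space[OF assms(1)] by auto
    then show ?thesis using DD_lt[OF assms(1)] prob_space.prob_space[OF probs_prob[OF assms(1)]] by simp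
  qed
  moreover have "cdfL L M = cdf (DD M)" using cdfL_D[OF assms(1)] by auto
  ultimately have "(cdfL L M \<longlongrightarrow> 1) (at s within {..<s})" by simp
  then have "(cdfL L M \<longlongrightarrow> 1) (at s within L)" using tendsto_within_subset Ls by blast
  then show ?thesis using True by (simp add: to_sup_def s_def)
next
  case False
  have "(cdf (DD M) \<longlongrightarrow> 1) at_top"
    using real_distribution.cdf_lim_at_top_prob[OF realD[OF assms(1)]] .
  moreover have "cdfL L M = cdf (DD M)" using cdfL_D[OF assms(1)] by auto
  ultimately have "(cdfL L M \<longlongrightarrow> 1) at_top" by simp
  then have "(cdfL L M \<longlongrightarrow> 1) (inf at_top (principal L))"
    using tendsto_mono inf_le1 by blast
  then show ?thesis using False by (simp add: to_sup_def)
qed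

lemma cdf_to_inf: assumes "M \<in> probs L" "\<not> inf_in L"
  shows "(cdfL L M \<longlongrightarrow> 0) (to_inf L)"
proof (cases "bdd_below L")
  case True
  define s where "s = Inf L"
  have sL: "s \<notin> L" using assms True by (simp add: inf_in_def s_def)
  have Ls: "L \<subseteq> {s<..}"
  proof
    fix y assume "y \<in> L" then show "y \<in> {s<..}" using True sL cInf_lower[of y L] s_def
      by (cases "y = s") auto
  qed
  have "(cdfL L M \<longlongrightarrow> cdfL L M s) (at s within L)" using cdfL_rc[OF assms(1) Ls] .
  moreover have "cdfL L M s = 0"
  proof -
    have "{y\<in>L. y \<le> s} = {}" using Ls by auto
    then show ?thesis unfolding cdfL_def by (metis measure_empty)
  qed
  ultimately show ?thesis using True by (simp add: to_inf_def s_def)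
next
  case False
  have "(cdf (DD M) \<longlongrightarrow> 0) at_bot"
    using finite_borel_measure.cdf_lim_at_bot[OF real_distribution.finite_borel_measure_M[OF realD[OF assms(1)]]] .
  moreover have "cdfL L M = cdf (DD M)" using cdfL_D[OF assms(1)] by auto
  ultimately have "(cdfL L M \<longlongrightarrow> 0) at_bot" by simp
  then have "(cdfL L M \<longlongrightarrow> 0) (inf at_bot (principal L))"
    using tendsto_mono inf_le1 by blast
  then show ?thesis using False by (simp add: to_inf_def)
qed

lemma cdf_eq_all: assumes M: "M \<in> probs L" and N: "N \<in> probs L"
  and eq: "\<forall>a\<in>L. cdfL L M a = cdfL L N a"
  shows "cdfL L M x = cdfL L N x"
proof -
  define A where "A = {y\<in>L. y \<le> x}"
  show ?thesis
  proof (cases "A = {}")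
    case True then have "{y\<in>L. y \<le> x} = {}" by (simp add: A_def)
    then show ?thesis unfolding cdfL_def by (metis measure_empty)
  next
    case False
    have bA: "bdd_above A" unfolding A_def by (rule bdd_aboveI[of _ x]) auto
    define s where "s = Sup A"
    have sx: "s \<le> x" unfolding s_def using False by (rule cSup_least) (auto simp: A_def)
    have Aeq: "{y\<in>L. y \<le> x} = {y\<in>L. y \<le> s}"
      using cSup_upper[OF _ bA] sx by (auto simp: A_def s_def)
    have cx: "cdfL L K x = cdfL L K s" for K using Aeq by (simp add: cdfL_def)
    show ?thesis
    proof (cases "s \<in> L")
      case True then show ?thesis using eq cx by simp
    next
      case sL: False
      have As: "A \<subseteq> {..<s}"
      proof
        fix y assume y: "y \<in> A"
        then have "y \<le> s" "y \<in> L" using cSup_upper[OF y bA] by (auto simp: s_def A_def)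
        then show "y \<in> {..<s}" using sL by (cases "y = s") auto
      qed
      have lim: "(cdfL L K \<longlongrightarrow> cdfL L K s) (at s within A)" if K: "K \<in> probs L" for K
      proof -
        have "(cdf (DD K) \<longlongrightarrow> measure (DD K) {..<s}) (at_left s)"
          using finite_borel_measure.cdf_at_left[OF real_distribution.finite_borel_measure_M[OF realD[OF K]]] .
        moreover have "measure (DD K) {..<s} = cdfL L K s"
          using DD_lt[OF K] sL unfolding cdfL_def
          by (metis (no_types, lifting) Collect_cong order.order_iff_strict)
        moreover have "cdfL L K = cdf (DD K)" using cdfL_D[OF K] by auto
        ultimately have "(cdfL L K \<longlongrightarrow> cdfL L K s) (at s within {..<s})" by simp
        then show ?thesis using tendsto_within_subset As by blast
      qed
      have ntriv: "\<not> trivial_limit (at s within A)"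
        unfolding trivial_limit_within islimpt_approachable
      proof (intro notI, elim notE, intro allI impI)
        fix e :: real assume e: "0 < e"
        have "s - e < Sup A" using e s_def by simp
        then obtain y where y: "y \<in> A" "s - e < y" using less_cSup_iff[OF False bA] by blast
        have "y \<le> s" using cSup_upper[OF y(1) bA] s_def by simp
        moreover have "y \<noteq> s" using y(1) sL by (auto simp: A_def)
        ultimately show "\<exists>x'\<in>A. x' \<noteq> s \<and> dist x' s < e" using y by (auto simp: dist_real_def)
      qed
      have ev: "eventually (\<lambda>y. cdfL L N y = cdfL L M y) (at s within A)"
        using eq by (auto simp: eventually_at_filter A_def)
      have "(cdfL L M \<longlongrightarrow> cdfL L N s) (at s within A)"
        using tendsto_cong[OF ev] lim[OF N] by simp
      then have "cdfL L M s = cdfL L N s" using tendsto_unique[OF ntriv lim[OF M]] by simp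
      then show ?thesis using cx by simp
    qed
  qed
qed

lemma probs_unique: assumes Lb: "L \<in> sets borel" and M: "M \<in> probs L" and N: "N \<in> probs L"
  and eq: "\<forall>a\<in>L. cdfL L M a = cdfL L N a"
  shows "M = N"
proof -
  have "cdf (DD M) = cdf (DD N)"
    using cdf_eq_all[OF M N eq] cdfL_D[OF M] cdfL_D[OF N] by auto
  then have DDeq: "DD M = DD N" using cdf_unique realD M N by blast
  show ?thesis
  proof (rule measure_eqI)
    show "sets M = sets N" using probs_sets[OF M] probs_sets[OF N] by simp
  next
    fix A assume A: "A \<in> sets M"
    have AL: "A \<subseteq> L" "A \<in> sets borel"
      using A probs_sets[OF M] Lb by (auto simp: sets_restrict_space_iff)
    have "emeasure (DD K) A = emeasure K A" if K: "K \<in> probs L" for K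
    proof -
      have "emeasure (DD K) A = emeasure K ((\<lambda>x. x) -` A \<inter> space K)"
        by (rule emeasure_distr[OF probs_meas[OF K] AL(2)])
      also have "(\<lambda>x. x) -` A \<inter> space K = A" using AL probs_space[OF K] by auto
      finally show ?thesis .
    qed
    then show "emeasure M A = emeasure N A" using DDeq M N by metis
  qed
qed



definition mcv :: "('n::finite \<Rightarrow> real) \<Rightarrow> 'n set \<Rightarrow> real" where
  "mcv t S = (if S = {} then 1 else Min (t ` S))"

definition FF :: "('n::finite set \<Rightarrow> real) \<Rightarrow> ('n \<Rightarrow> real) \<Rightarrow> real" where
  "FF g t = Max ((\<lambda>S. min (g S) (mcv t S)) ` UNIV)"

lemma FF_ge: "min (g S) (mcv t S) \<le> FF g t"
  unfolding FF_def by (rule Max_ge) auto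

lemma FF_le: "(\<And>S. min (g S) (mcv t S) \<le> c) \<Longrightarrow> FF g t \<le> c"
  unfolding FF_def by (subst Max_le_iff) auto

lemma FF_att: "\<exists>S. FF g t = min (g S) (mcv t S)"
proof -
  have "FF g t \<in> (\<lambda>S. min (g S) (mcv t S)) ` UNIV" unfolding FF_def by (rule Max_in) auto
  then show ?thesis by auto
qed

lemma mcv_notin: "i \<notin> S \<Longrightarrow> mcv (t(i:=s)) S = mcv t S"
  unfolding mcv_def by (auto intro!: arg_cong[where f=Min] image_cong)

lemma mcv_le: "i \<in> S \<Longrightarrow> mcv t S \<le> t i"
  unfolding mcv_def by auto

lemma mcv_ins: "i \<in> S \<Longrightarrow> S - {i} \<noteq> {} \<Longrightarrow> mcv t S = min (t i) (mcv t (S - {i}))"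
proof -
  assume "i \<in> S" "S - {i} \<noteq> {}"
  then have "S = insert i (S - {i})" by auto
  then have "t ` S = insert (t i) (t ` (S - {i}))" by auto
  then show ?thesis using \<open>S - {i} \<noteq> {}\<close> unfolding mcv_def
    by (auto simp: Min_insert)
qed

lemma mcv_single: "mcv t {i} = t i" unfolding mcv_def by simp

lemma FF_unc:
  "(t i < FF g t \<longrightarrow> FF g t \<le> FF g (t(i:=s))) \<and> (t i > FF g t \<longrightarrow> FF g (t(i:=s)) \<le> FF g t)"
proof (intro conjI impI)
  assume lt: "t i < FF g t"
  obtain S where S: "FF g t = min (g S) (mcv t S)" using FF_att by blast
  have "i \<notin> S"
  proof
    assume "i \<in> S" then have "mcv t S \<le> t i" by (rule mcv_le)
    then show False using S lt by linarith
  qed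
  then have "FF g t = min (g S) (mcv (t(i:=s)) S)" using S mcv_notin by metis
  then show "FF g t \<le> FF g (t(i:=s))" using FF_ge by metis
next
  assume gt: "t i > FF g t"
  show "FF g (t(i:=s)) \<le> FF g t"
  proof (rule FF_le)
    fix S
    have T: "min (g S) (mcv t S) \<le> FF g t" by (rule FF_ge)
    show "min (g S) (mcv (t(i:=s)) S) \<le> FF g t"
    proof (cases "i \<in> S")
      case False then show ?thesis using T mcv_notin by metis
    next
      case iS: True
      show ?thesis
      proof (cases "S - {i} = {}")
        case True
        then have "S = {i}" using iS by auto
        then show ?thesis using T gt by (simp add: mcv_single)
      next
        case False
        have "mcv t S = min (t i) (mcv t (S - {i}))" using mcv_ins[OF iS False] .
        moreover have "mcv (t(i:=s)) S = min s (mcv (t(i:=s)) (S - {i}))"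
          using mcv_ins[OF iS False] by simp
        moreover have "mcv (t(i:=s)) (S - {i}) = mcv t (S - {i})" by (rule mcv_notin) simp
        ultimately show ?thesis using T gt by linarith
      qed
    qed
  qed
qed

lemma mono_unc:
  fixes c w :: "'a \<Rightarrow> real"
  assumes unc: "\<forall>x\<in>X. \<forall>y\<in>X. (c x < w x \<longrightarrow> w x \<le> w y) \<and> (c x > w x \<longrightarrow> w y \<le> w x)"
    and x: "x \<in> X" and y: "y \<in> X" and cxy: "c x \<le> c y"
  shows "w x \<le> w y"
proof (rule ccontr)
  assume "\<not> w x \<le> w y"
  then have lt: "w y < w x" by simp
  have "\<not> c x < w x" using unc x y lt by force
  then have "c y > w y" using lt cxy by linarith
  then show False using unc x y lt by force
qed

lemma med_unc:
  fixes c w :: "'a \<Rightarrow> real"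
  assumes unc: "\<forall>x\<in>X. \<forall>y\<in>X. (c x < w x \<longrightarrow> w x \<le> w y) \<and> (c x > w x \<longrightarrow> w y \<le> w x)"
    and x0: "x0 \<in> X" and x1: "x1 \<in> X" and c0: "c x0 = 0" and c1: "c x1 = 1"
    and cr: "\<forall>x\<in>X. 0 \<le> c x \<and> c x \<le> 1" and x: "x \<in> X"
  shows "w x = max (w x0) (min (c x) (w x1))"
proof -
  have a: "w x0 \<le> w x" using mono_unc[OF unc x0 x] c0 cr x by auto
  have b: "w x \<le> w x1" using mono_unc[OF unc x x1] c1 cr x by auto
  consider "c x < w x" | "c x > w x" | "c x = w x" by linarith
  then show ?thesis
  proof cases
    case 1 then have "w x \<le> w x0" using unc x x0 by blast
    then show ?thesis using a 1 by linarith
  next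
    case 2 then have "w x1 \<le> w x" using unc x x1 by blast
    then show ?thesis using a b 2 by linarith
  next
    case 3 then show ?thesis using a b by linarith
  qed
qed

lemma FF_med: assumes "0 \<le> t i" "t i \<le> 1"
  shows "FF g t = max (FF g (t(i:=0))) (min (t i) (FF g (t(i:=1))))"
proof -
  have "FF g (t(i:=t i)) = max (FF g (t(i:=0))) (min (id (t i)) (FF g (t(i:=1))))"
    by (rule med_unc[where X="{0..1}" and c=id and w="\<lambda>s. FF g (t(i:=s))"])
       (use assms FF_unc[of "t(i:=_)" i g] in auto)
  then show ?thesis by simp
qed

lemma FF_vertex: assumes mono: "\<And>S S'. S \<subseteq> S' \<Longrightarrow> g S \<le> g S'"
  and r: "\<And>S. 0 \<le> g S \<and> g S \<le> 1"
  shows "FF g (\<lambda>j. if j \<in> S then 1 else 0) = g S"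
proof (rule antisym)
  show "FF g (\<lambda>j. if j \<in> S then 1 else 0) \<le> g S"
  proof (rule FF_le)
    fix S'
    show "min (g S') (mcv (\<lambda>j. if j \<in> S then 1 else 0) S') \<le> g S"
    proof (cases "S' \<subseteq> S")
      case True then show ?thesis using mono[OF True] by linarith
    next
      case False
      then obtain j where j: "j \<in> S'" "j \<notin> S" by auto
      then have "mcv (\<lambda>j. if j \<in> S then 1 else 0) S' \<le> 0" using mcv_le[OF j(1), of "\<lambda>j. if j \<in> S then 1 else 0"] by simp
      then show ?thesis using r[of S] by linarith
    qed
  qed
next
  have "mcv (\<lambda>j. if j \<in> S then 1 else 0) S = 1"
  proof (cases "S = {}")
    case False
    then have "(\<lambda>j. if j \<in> S then 1 else (0::real)) ` S = {1}" by auto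
    then show ?thesis using False by (simp add: mcv_def)
  qed (simp add: mcv_def)
  then show "g S \<le> FF g (\<lambda>j. if j \<in> S then 1 else 0)"
    using FF_ge[of g S "\<lambda>j. if j \<in> S then 1 else 0"] r[of S] by simp
qed

lemma FF_ones: assumes "\<And>S. g S \<le> 1" "g UNIV = 1"
  shows "FF g (\<lambda>j. 1) = 1"
proof (rule antisym)
  show "FF g (\<lambda>j. 1) \<le> 1" by (rule FF_le) (use assms in \<open>simp add: min.coboundedI1\<close>)
  have "mcv (\<lambda>j. 1) (UNIV::'a set) = 1" by (simp add: mcv_def)
  then show "1 \<le> FF g (\<lambda>j::'a. 1)" using FF_ge[of g UNIV "\<lambda>j. 1"] assms by simp
qed



definition nm :: "real set \<Rightarrow> real \<Rightarrow> bool" where "nm L a = (\<exists>b\<in>L. a < b)"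
definition bp :: "real set \<Rightarrow> real \<Rightarrow> real" where "bp L a = (SOME b. b \<in> L \<and> a < b)"
definition VV :: "real set \<Rightarrow> 'n set \<Rightarrow> real \<Rightarrow> 'n \<Rightarrow> real measure" where
  "VV L S a = (\<lambda>j. if j \<in> S then dl L a else dl L (bp L a))"
definition fam :: "real set \<Rightarrow> (('n::finite \<Rightarrow> real measure) \<Rightarrow> real measure) \<Rightarrow> real \<Rightarrow> 'n set \<Rightarrow> real \<Rightarrow> real" where
  "fam L psi c S a = (if nm L a then cdfL L (psi (VV L S a)) a else if S = {} then c else 1)"

lemma bp: "nm L a \<Longrightarrow> bp L a \<in> L \<and> a < bp L a"
  unfolding nm_def bp_def by (rule someI_ex) auto

lemma prof_upd: "P \<in> profiles L \<Longrightarrow> q \<in> probs L \<Longrightarrow> P(i:=q) \<in> profiles L"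
  by (simp add: profiles_def)

lemma VV_prof: "a \<in> L \<Longrightarrow> nm L a \<Longrightarrow> VV L S a \<in> profiles L"
  using bp[of L a] by (simp add: profiles_def VV_def dl_probs)

lemma VV_lev: "a \<in> L \<Longrightarrow> nm L a \<Longrightarrow> cdfL L (VV L S a j) a = (if j \<in> S then 1 else 0)"
  using bp[of L a] by (simp add: VV_def cdf_dl)

lemma min_coal_mcv: "min_coal L p S a = mcv (\<lambda>i. cdfL L (p i) a) S"
  by (simp add: min_coal_def mcv_def image_image)

context
  fixes L :: "real set" and psi :: "('n::finite \<Rightarrow> real measure) \<Rightarrow> real measure"
  assumes PAF: "is_PAF L psi" and SP: "level_SP L psi"
begin

lemma psi_probs: "P \<in> profiles L \<Longrightarrow> psi P \<in> probs L"
  using PAF by (simp add: is_PAF_def)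

lemma unc_psi: assumes P: "P \<in> profiles L" and a: "a \<in> L"
  shows "\<forall>x\<in>probs L. \<forall>y\<in>probs L.
    (cdfL L x a < cdfL L (psi (P(i:=x))) a \<longrightarrow> cdfL L (psi (P(i:=x))) a \<le> cdfL L (psi (P(i:=y))) a) \<and>
    (cdfL L x a > cdfL L (psi (P(i:=x))) a \<longrightarrow> cdfL L (psi (P(i:=y))) a \<le> cdfL L (psi (P(i:=x))) a)"
proof (intro ballI)
  fix x y assume x: "x \<in> probs L" and y: "y \<in> probs L"
  have Px: "P(i:=x) \<in> profiles L" using prof_upd[OF P x] .
  show "(cdfL L x a < cdfL L (psi (P(i:=x))) a \<longrightarrow> cdfL L (psi (P(i:=x))) a \<le> cdfL L (psi (P(i:=y))) a) \<and>
    (cdfL L x a > cdfL L (psi (P(i:=x))) a \<longrightarrow> cdfL L (psi (P(i:=y))) a \<le> cdfL L (psi (P(i:=x))) a)"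
    using SP Px y a unfolding level_SP_def
    by (metis fun_upd_same fun_upd_upd)
qed

lemma psi_mono1: assumes P: "P \<in> profiles L" and q: "q \<in> probs L" and a: "a \<in> L"
  and le: "cdfL L (P i) a \<le> cdfL L q a"
  shows "cdfL L (psi P) a \<le> cdfL L (psi (P(i:=q))) a"
proof -
  have Pi: "P i \<in> probs L" using P by (simp add: profiles_def)
  have "cdfL L (psi (P(i:=P i))) a \<le> cdfL L (psi (P(i:=q))) a"
    by (rule mono_unc[OF unc_psi[OF P a] Pi q]) (use le in simp)
  then show ?thesis by simp
qed

lemma psi_mono: assumes P: "P \<in> profiles L" and Q: "Q \<in> profiles L" and a: "a \<in> L"
  and le: "\<forall>j. cdfL L (P j) a \<le> cdfL L (Q j) a"
  shows "cdfL L (psi P) a \<le> cdfL L (psi Q) a"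
proof -
  have "\<forall>P\<in>profiles L. {j. P j \<noteq> Q j} \<subseteq> D \<longrightarrow> (\<forall>j. cdfL L (P j) a \<le> cdfL L (Q j) a)
      \<longrightarrow> cdfL L (psi P) a \<le> cdfL L (psi Q) a" if "finite D" for D :: "'n set"
    using that
  proof (induction D rule: finite_induct)
    case empty
    then show ?case by (auto intro!: ext)
  next
    case (insert i D)
    show ?case
    proof (intro ballI impI)
      fix P assume P: "P \<in> profiles L" and sub: "{j. P j \<noteq> Q j} \<subseteq> insert i D"
        and le: "\<forall>j. cdfL L (P j) a \<le> cdfL L (Q j) a"
      have Qi: "Q i \<in> probs L" using Q by (simp add: profiles_def)
      have P': "P(i:=Q i) \<in> profiles L" using prof_upd[OF P Qi] .
      have sub': "{j. (P(i:=Q i)) j \<noteq> Q j} \<subseteq> D" using sub by auto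
      have le': "\<forall>j. cdfL L ((P(i:=Q i)) j) a \<le> cdfL L (Q j) a" using le by simp
      have "cdfL L (psi P) a \<le> cdfL L (psi (P(i:=Q i))) a"
        using psi_mono1[OF P Qi a] le by simp
      also have "\<dots> \<le> cdfL L (psi Q) a"
        using insert.IH P' sub' le' by blast
      finally show "cdfL L (psi P) a \<le> cdfL L (psi Q) a" .
    qed
  qed
  then show ?thesis using P le by auto
qed

lemma psi_peak: assumes P: "P \<in> profiles L" and Q: "Q \<in> profiles L" and a: "a \<in> L"
  and eq: "\<forall>j. cdfL L (P j) a = cdfL L (Q j) a"
  shows "cdfL L (psi P) a = cdfL L (psi Q) a"
  using psi_mono[OF P Q a] psi_mono[OF Q P a] eq by (simp add: order_antisym)

lemma fam_val: assumes a: "a \<in> L" and n: "nm L a" and Q: "Q \<in> profiles L"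
  and lev: "\<forall>j. cdfL L (Q j) a = (if j \<in> S then 1 else 0)"
  shows "fam L psi c S a = cdfL L (psi Q) a"
  using psi_peak[OF VV_prof[OF a n, of S] Q a] lev VV_lev[OF a n, of S] n by (simp add: fam_def)

lemma fam_range_nm: assumes a: "a \<in> L" and n: "nm L a" shows "0 \<le> fam L psi c S a \<and> fam L psi c S a \<le> 1"
  using cdfL_ge0[OF psi_probs[OF VV_prof[OF a n, of S]]] cdfL_le1[OF psi_probs[OF VV_prof[OF a n, of S]]] n
  by (simp add: fam_def)

lemma fam_mono_nm: assumes a: "a \<in> L" and n: "nm L a" and SS: "S \<subseteq> S'"
  shows "fam L psi c S a \<le> fam L psi c S' a"
proof -
  have "\<forall>j. cdfL L (VV L S a j) a \<le> cdfL L (VV L S' a j) a" using VV_lev[OF a n, of S] VV_lev[OF a n, of S'] SS by auto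
  then show ?thesis unfolding fam_def using psi_mono[OF VV_prof[OF a n, of S] VV_prof[OF a n, of S'] a] n by auto
qed

lemma rep_nm: assumes a: "a \<in> L" and n: "nm L a" and P: "P \<in> profiles L"
  shows "cdfL L (psi P) a = FF (\<lambda>S. fam L psi c S a) (\<lambda>j. cdfL L (P j) a)"
proof -
  define b where "b = bp L a"
  have b: "b \<in> L" "a < b" using bp[OF n] b_def by auto
  define g where "g = (\<lambda>S. fam L psi c S a)"
  have dla: "dl L a \<in> probs L" and dlb: "dl L b \<in> probs L" using dl_probs a b by auto
  have ca: "cdfL L (dl L a) a = 1" and cb: "cdfL L (dl L b) a = 0" using cdf_dl a b by auto
  have lev_upd: "(\<lambda>j. cdfL L ((P(i:=q)) j) a) = (\<lambda>j. cdfL L (P j) a)(i := cdfL L q a)" for P i q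
    by auto
  have "\<forall>P\<in>profiles L. {j. P j \<noteq> dl L a \<and> P j \<noteq> dl L b} \<subseteq> D \<longrightarrow>
      cdfL L (psi P) a = FF g (\<lambda>j. cdfL L (P j) a)" if "finite D" for D :: "'n set"
    using that
  proof (induction D rule: finite_induct)
    case empty
    show ?case
    proof (intro ballI impI)
      fix P :: "'n \<Rightarrow> real measure" assume P: "P \<in> profiles L" and sub: "{j. P j \<noteq> dl L a \<and> P j \<noteq> dl L b} \<subseteq> {}"
      define S :: "'n set" where "S = {j. P j = dl L a}"
      have PV: "P = VV L S a" unfolding VV_def S_def
        by (rule ext) (use sub b_def in auto)
      have lev: "(\<lambda>j. cdfL L (P j) a) = (\<lambda>j. if j \<in> S then 1 else 0)"
        using VV_lev[OF a n, of S] PV by auto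
      have "FF g (\<lambda>j::'n. if j \<in> S then 1 else 0) = g S"
        by (rule FF_vertex) (use fam_mono_nm[OF a n] fam_range_nm[OF a n] in \<open>auto simp: g_def\<close>)
      then show "cdfL L (psi P) a = FF g (\<lambda>j. cdfL L (P j) a)"
        using lev PV n by (simp add: g_def fam_def)
    qed
  next
    case (insert i D)
    show ?case
    proof (intro ballI impI)
      fix P :: "'n \<Rightarrow> real measure" assume P: "P \<in> profiles L" and sub: "{j. P j \<noteq> dl L a \<and> P j \<noteq> dl L b} \<subseteq> insert i D"
      define t where "t = (\<lambda>j. cdfL L (P j) a)"
      have Pi: "P i \<in> probs L" using P by (simp add: profiles_def)
      have P0: "P(i:=dl L b) \<in> profiles L" and P1: "P(i:=dl L a) \<in> profiles L"
        using prof_upd[OF P dlb] prof_upd[OF P dla] by auto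
      have sub0: "{j. (P(i:=dl L b)) j \<noteq> dl L a \<and> (P(i:=dl L b)) j \<noteq> dl L b} \<subseteq> D"
        using sub by auto
      have sub1: "{j. (P(i:=dl L a)) j \<noteq> dl L a \<and> (P(i:=dl L a)) j \<noteq> dl L b} \<subseteq> D"
        using sub by auto
      have "cdfL L (psi (P(i:=dl L b))) a = FF g (\<lambda>j. cdfL L ((P(i:=dl L b)) j) a)"
        using insert.IH P0 sub0 by blast
      then have IH0: "cdfL L (psi (P(i:=dl L b))) a = FF g (t(i:=0))"
        using lev_upd[of P i "dl L b"] cb by (simp add: t_def)
      have "cdfL L (psi (P(i:=dl L a))) a = FF g (\<lambda>j. cdfL L ((P(i:=dl L a)) j) a)"
        using insert.IH P1 sub1 by blast
      then have IH1: "cdfL L (psi (P(i:=dl L a))) a = FF g (t(i:=1))"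
        using lev_upd[of P i "dl L a"] ca by (simp add: t_def)
      have "cdfL L (psi (P(i:=P i))) a = max (cdfL L (psi (P(i:=dl L b))) a)
              (min (cdfL L (P i) a) (cdfL L (psi (P(i:=dl L a))) a))"
        by (rule med_unc[OF unc_psi[OF P a] dlb dla cb ca _ Pi])
           (use cdfL_ge0 cdfL_le1 in blast)
      then have "cdfL L (psi P) a = max (FF g (t(i:=0))) (min (t i) (FF g (t(i:=1))))"
        using IH0 IH1 by (simp add: t_def)
      also have "\<dots> = FF g t"
        by (rule FF_med[symmetric]) (use cdfL_ge0[OF Pi] cdfL_le1[OF Pi] in \<open>auto simp: t_def\<close>)
      finally show "cdfL L (psi P) a = FF g (\<lambda>j. cdfL L (P j) a)" by (simp add: t_def)
    qed
  qed
  then show ?thesis using P by (force simp: g_def)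
qed

end


lemma rep_FF: assumes "represents L psi f" "P \<in> profiles L" "a \<in> L"
  shows "cdfL L (psi P) a = FF (\<lambda>S. f S a) (\<lambda>j. cdfL L (P j) a)"
  using assms unfolding represents_def FF_def min_coal_mcv by blast

lemma FF_const: assumes "g {} = 0" "g UNIV = 1" "0 \<le> v" "v \<le> (1::real)"
  shows "FF g (\<lambda>j::'n::finite. v) = v"
proof (rule antisym)
  show "FF g (\<lambda>j. v) \<le> v"
  proof (rule FF_le)
    fix S :: "'n set"
    show "min (g S) (mcv (\<lambda>j. v) S) \<le> v"
    proof (cases "S = {}")
      case True then show ?thesis using assms by (simp add: mcv_def)
    next
      case False
      then have "(\<lambda>j. v) ` S = {v}" by auto
      then show ?thesis using False by (simp add: mcv_def)
    qed
  qed
  have "(\<lambda>j::'n. v) ` UNIV = {v}" by auto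
  then have "mcv (\<lambda>j::'n. v) UNIV = v" by (simp add: mcv_def)
  then show "v \<le> FF g (\<lambda>j. v)" using FF_ge[of g UNIV "\<lambda>j. v"] assms by simp
qed

context
  fixes L :: "real set" and psi :: "('n::finite \<Rightarrow> real measure) \<Rightarrow> real measure"
  assumes PAF: "is_PAF L psi" and SP: "level_SP L psi"
begin

lemma rep_fam: assumes c1: "c \<le> 1" and a: "a \<in> L" and P: "P \<in> profiles L"
  shows "cdfL L (psi P) a = Max ((\<lambda>S. min (fam L psi c S a) (min_coal L P S a)) ` UNIV)"
proof -
  have "cdfL L (psi P) a = FF (\<lambda>S. fam L psi c S a) (\<lambda>j. cdfL L (P j) a)"
  proof (cases "nm L a")
    case True then show ?thesis using rep_nm[OF PAF SP a True P] by simp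
  next
    case False
    then have all: "\<forall>b\<in>L. b \<le> a" by (auto simp: nm_def not_less)
    have "cdfL L (psi P) a = 1" using cdfL_max[OF psi_probs[OF PAF SP P] all] .
    moreover have "(\<lambda>j. cdfL L (P j) a) = (\<lambda>j. 1)"
      using cdfL_max[OF _ all] P by (auto simp: profiles_def)
    moreover have "FF (\<lambda>S. fam L psi c S a) (\<lambda>j. 1) = 1"
      by (rule FF_ones) (use False c1 in \<open>auto simp: fam_def\<close>)
    ultimately show ?thesis by simp
  qed
  then show ?thesis unfolding FF_def min_coal_mcv .
qed

lemma adm_fam: assumes c0: "0 \<le> c" and c1: "c \<le> 1"
  and hc: "\<forall>a\<in>L. nm L a \<longrightarrow> fam L psi c {} a \<le> c" and Lne: "L \<noteq> {}"
  shows "admissible_family L (fam L psi c)"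
proof -
  have range: "0 \<le> fam L psi c S a \<and> fam L psi c S a \<le> 1" if a: "a \<in> L" for S a
    using fam_range_nm[OF PAF SP a] c0 c1 by (cases "nm L a") (auto simp: fam_def)
  have monoS: "fam L psi c S a \<le> fam L psi c S' a" if a: "a \<in> L" and SS: "S \<subseteq> S'" for S S' a
    using fam_mono_nm[OF PAF SP a _ SS] c1 SS by (cases "nm L a") (auto simp: fam_def)
  have monoa: "mono_on L (fam L psi c S)" for S
  proof (rule mono_onI)
    fix a a' assume a: "a \<in> L" and a': "a' \<in> L" and le: "a \<le> a'"
    show "fam L psi c S a \<le> fam L psi c S a'"
    proof (cases "nm L a'")
      case True
      define b' where "b' = bp L a'"
      have b': "b' \<in> L" "a' < b'" using bp[OF True] b'_def by auto
      have na: "nm L a" using b' le unfolding nm_def by (meson le_less_trans)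
      define Q where "Q = (\<lambda>j. if j \<in> S then dl L a else dl L b')"
      have Q: "Q \<in> profiles L" using a b' by (simp add: Q_def profiles_def dl_probs)
      have "fam L psi c S a = cdfL L (psi Q) a"
        by (rule fam_val[OF PAF SP a na Q]) (use a b' le in \<open>auto simp: Q_def cdf_dl\<close>)
      moreover have "fam L psi c S a' = cdfL L (psi Q) a'"
        by (rule fam_val[OF PAF SP a' True Q]) (use a b' le in \<open>auto simp: Q_def cdf_dl\<close>)
      ultimately show ?thesis using cdfL_mono[OF psi_probs[OF PAF SP Q] le] by simp
    next
      case False
      show ?thesis
      proof (cases "nm L a")
        case True
        then show ?thesis using False range[OF a, of S] hc a by (auto simp: fam_def)
      next
        case na: False
        then have "a' \<le> a" using a' by (auto simp: nm_def not_less)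
        then show ?thesis using le by simp
      qed
    qed
  qed
  have rc: "(fam L psi c S \<longlongrightarrow> fam L psi c S a) (at a within (L \<inter> {a<..}))" if a: "a \<in> L" for S a
  proof (cases "nm L a")
    case False
    then have "L \<inter> {a<..} = {}" by (auto simp: nm_def)
    then show ?thesis by simp
  next
    case True
    define b where "b = bp L a"
    have b: "b \<in> L" "a < b" using bp[OF True] b_def by auto
    define Q where "Q = VV L S a"
    have Q: "Q \<in> profiles L" using VV_prof[OF a True] by (simp add: Q_def)
    have ev: "eventually (\<lambda>x. cdfL L (psi Q) x = fam L psi c S x) (at a within (L \<inter> {a<..}))"
      unfolding eventually_at
    proof (intro exI[of _ "b - a"] conjI ballI impI)
      show "0 < b - a" using b by simp
      fix x assume x: "x \<in> L \<inter> {a<..}" and d: "x \<noteq> a \<and> dist x a < b - a"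
      have xb: "x < b" using d x by (auto simp: dist_real_def)
      have nx: "nm L x" using b xb by (auto simp: nm_def)
      show "cdfL L (psi Q) x = fam L psi c S x"
        by (rule fam_val[OF PAF SP _ nx Q, symmetric])
           (use x xb a b in \<open>auto simp: Q_def VV_def b_def[symmetric] cdf_dl\<close>)
    qed
    have "fam L psi c S a = cdfL L (psi Q) a" using True by (simp add: fam_def Q_def)
    then show ?thesis using tendsto_cong[OF ev] cdfL_rc[OF psi_probs[OF PAF SP Q], of "L \<inter> {a<..}" a] by auto
  qed
  have sup: "if sup_in L then fam L psi c UNIV (Sup L) = 1 else (fam L psi c UNIV \<longlongrightarrow> 1) (to_sup L)"
  proof (cases "sup_in L")
    case True
    then have "\<not> nm L (Sup L)" using cSup_upper[of _ L] by (auto simp: sup_in_def nm_def not_less)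
    then show ?thesis using True by (simp add: fam_def)
  next
    case False
    have allnm: "nm L a" if "a \<in> L" for a
    proof (rule ccontr)
      assume "\<not> nm L a"
      then have "\<forall>b\<in>L. b \<le> a" by (auto simp: nm_def not_less)
      then have "bdd_above L" "Sup L = a" using that cSup_eq_maximum by (auto simp: bdd_above_def)
      then show False using False that by (simp add: sup_in_def)
    qed
    obtain a0 where a0: "a0 \<in> L" using Lne by blast
    define Q where "Q = (\<lambda>j::'n. dl L a0)"
    have Q: "Q \<in> profiles L" using a0 by (simp add: Q_def profiles_def dl_probs)
    have evL: "eventually (\<lambda>x. x \<in> L \<and> a0 \<le> x) (to_sup L)"
    proof (cases "bdd_above L")
      case True
      define s where "s = Sup L"
      have sL: "s \<notin> L" using False True by (simp add: sup_in_def s_def)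
      have "a0 \<le> s" using cSup_upper[OF a0 True] s_def by simp
      then have a0s: "a0 < s" using sL a0 by (cases "a0 = s") auto
      have "eventually (\<lambda>x. x \<in> L \<and> a0 \<le> x) (at s within L)"
        unfolding eventually_at
        by (intro exI[of _ "s - a0"]) (use a0s in \<open>auto simp: dist_real_def\<close>)
      then show ?thesis using True by (simp add: to_sup_def s_def)
    next
      case nb: False
      have "eventually (\<lambda>x. x \<in> L \<longrightarrow> x \<in> L \<and> a0 \<le> x) at_top"
        using eventually_ge_at_top[of a0] by eventually_elim auto
      then show ?thesis using nb by (simp add: to_sup_def eventually_inf_principal)
    qed
    have ev: "eventually (\<lambda>x. cdfL L (psi Q) x = fam L psi c UNIV x) (to_sup L)"
      using evL
    proof eventually_elim
      case (elim x)
      show ?case by (rule fam_val[OF PAF SP _ allnm Q, symmetric]) (use elim a0 in \<open>auto simp: Q_def cdf_dl\<close>)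
    qed
    show ?thesis using False tendsto_cong[OF ev] cdf_to_sup[OF psi_probs[OF PAF SP Q] False] by simp
  qed
  have inf: "\<not> inf_in L \<longrightarrow> (fam L psi c {} \<longlongrightarrow> 0) (to_inf L)"
  proof
    assume False: "\<not> inf_in L"
    obtain b0 where b0: "b0 \<in> L" using Lne by blast
    define Q where "Q = (\<lambda>j::'n. dl L b0)"
    have Q: "Q \<in> profiles L" using b0 by (simp add: Q_def profiles_def dl_probs)
    have evL: "eventually (\<lambda>x. x \<in> L \<and> x < b0) (to_inf L)"
    proof (cases "bdd_below L")
      case True
      define s where "s = Inf L"
      have sL: "s \<notin> L" using False True by (simp add: inf_in_def s_def)
      have "s \<le> b0" using cInf_lower[OF b0 True] s_def by simp
      then have a0s: "s < b0" using sL b0 by (cases "b0 = s") auto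
      have "eventually (\<lambda>x. x \<in> L \<and> x < b0) (at s within L)"
        unfolding eventually_at
        by (intro exI[of _ "b0 - s"]) (use a0s in \<open>auto simp: dist_real_def\<close>)
      then show ?thesis using True by (simp add: to_inf_def s_def)
    next
      case nb: False
      have "eventually (\<lambda>x. x \<in> L \<longrightarrow> x \<in> L \<and> x < b0) at_bot"
        using eventually_le_at_bot[of "b0 - 1"] by eventually_elim auto
      then show ?thesis using nb by (simp add: to_inf_def eventually_inf_principal)
    qed
    have ev: "eventually (\<lambda>x. cdfL L (psi Q) x = fam L psi c {} x) (to_inf L)"
      using evL
    proof eventually_elim
      case (elim x)
      then have nx: "nm L x" using b0 by (auto simp: nm_def)
      show ?case by (rule fam_val[OF PAF SP _ nx Q, symmetric]) (use elim b0 in \<open>auto simp: Q_def cdf_dl\<close>)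
    qed
    show "(fam L psi c {} \<longlongrightarrow> 0) (to_inf L)"
      using tendsto_cong[OF ev] cdf_to_inf[OF psi_probs[OF PAF SP Q] False] by simp
  qed
  show ?thesis unfolding admissible_family_def
    using monoa rc range monoS sup inf by blast
qed

end


lemma SP_of_rep:
  fixes psi :: "('n::finite \<Rightarrow> real measure) \<Rightarrow> real measure"
  assumes rep: "represents L psi f" and PAF: "is_PAF L psi"
  shows "level_SP L psi"
  unfolding level_SP_def
proof (intro allI ballI)
  fix i and p :: "'n \<Rightarrow> real measure" and q a
  assume p: "p \<in> profiles L" and q: "q \<in> probs L" and a: "a \<in> L"
  define t where "t = (\<lambda>j. cdfL L (p j) a)"
  have e1: "cdfL L (psi p) a = FF (\<lambda>S. f S a) t" using rep_FF[OF rep p a] by (simp add: t_def)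
  have "cdfL L (psi (p(i:=q))) a = FF (\<lambda>S. f S a) (\<lambda>j. cdfL L ((p(i:=q)) j) a)"
    using rep_FF[OF rep prof_upd[OF p q] a] .
  also have "(\<lambda>j. cdfL L ((p(i:=q)) j) a) = t(i := cdfL L q a)" by (auto simp: t_def)
  finally have e2: "cdfL L (psi (p(i:=q))) a = FF (\<lambda>S. f S a) (t(i := cdfL L q a))" .
  show "(cdfL L (p i) a < cdfL L (psi p) a \<longrightarrow> cdfL L (psi p) a \<le> cdfL L (psi (p(i := q))) a) \<and>
        (cdfL L (psi p) a < cdfL L (p i) a \<longrightarrow> cdfL L (psi (p(i := q))) a \<le> cdfL L (psi p) a)"
    using FF_unc[of t i "\<lambda>S. f S a" "cdfL L q a"] e1 e2 by (simp add: t_def)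
qed

theorem mainTheorem1:
  fixes L :: "real set"
    and psi :: "('n::finite \<Rightarrow> real measure) \<Rightarrow> real measure"
  assumes "L \<in> sets borel"
    and "L \<noteq> {}"
    and "is_PAF L psi"
  shows "(level_SP L psi \<longleftrightarrow> (\<exists>f. admissible_family L f \<and> represents L psi f))
       \<and> (level_SP L psi \<longrightarrow>
            (unanimous L psi \<longleftrightarrow>
              (\<exists>f. admissible_family L f \<and> represents L psi f
                   \<and> (\<forall>a \<in> L. f {} a = 0 \<and> f UNIV a = 1))))"
proof (intro conjI impI iffI)
  assume SP: "level_SP L psi"
  have hc: "\<forall>a\<in>L. nm L a \<longrightarrow> fam L psi 1 {} a \<le> 1"
    using fam_range_nm[OF assms(3) SP] by blast
  show "\<exists>f. admissible_family L f \<and> represents L psi f"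
    using adm_fam[OF assms(3) SP _ _ hc assms(2)] rep_fam[OF assms(3) SP]
    by (auto simp: represents_def)
next
  assume "\<exists>f. admissible_family L f \<and> represents L psi f"
  then show "level_SP L psi" using SP_of_rep[OF _ assms(3)] by blast
next
  assume SP: "level_SP L psi" and U: "unanimous L psi"
  have val: "fam L psi 0 S a = (if S = {} then 0 else 1)" if a: "a \<in> L" and S: "S = {} \<or> S = UNIV" for S a
  proof (cases "nm L a")
    case True
    define b where "b = bp L a"
    have b: "b \<in> L" "a < b" using bp[OF True] b_def by auto
    show ?thesis
    proof (cases "S = {}")
      case True
      then have "VV L S a = (\<lambda>j. dl L b)" by (auto simp: VV_def b_def)
      then have "psi (VV L S a) = dl L b" using U dl_probs[OF b(1)] by (simp add: unanimous_def)
      then show ?thesis using \<open>nm L a\<close> True b by (simp add: fam_def cdf_dl)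
    next
      case False
      then have "S = UNIV" using S by simp
      then have "VV L S a = (\<lambda>j. dl L a)" by (auto simp: VV_def)
      then have "psi (VV L S a) = dl L a" using U dl_probs[OF a] by (simp add: unanimous_def)
      then show ?thesis using \<open>nm L a\<close> False a by (simp add: fam_def cdf_dl)
    qed
  next
    case False
    then show ?thesis using S by (auto simp: fam_def)
  qed
  have hc: "\<forall>a\<in>L. nm L a \<longrightarrow> fam L psi 0 {} a \<le> 0" using val by simp
  show "\<exists>f. admissible_family L f \<and> represents L psi f \<and> (\<forall>a\<in>L. f {} a = 0 \<and> f UNIV a = 1)"
    using adm_fam[OF assms(3) SP _ _ hc assms(2)] rep_fam[OF assms(3) SP] val
    by (auto simp: represents_def)
next
  assume SP: "level_SP L psi"
    and ex: "\<exists>f. admissible_family L f \<and> represents L psi f \<and> (\<forall>a\<in>L. f {} a = 0 \<and> f UNIV a = 1)"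
  then obtain f where rep: "represents L psi f" and f01: "\<forall>a\<in>L. f {} a = 0 \<and> f UNIV a = 1" by blast
  show "unanimous L psi" unfolding unanimous_def
  proof
    fix p assume p: "p \<in> probs L"
    have P: "(\<lambda>j::'n. p) \<in> profiles L" using p by (simp add: profiles_def)
    have pp: "psi (\<lambda>j. p) \<in> probs L" using assms(3) P by (simp add: is_PAF_def)
    show "psi (\<lambda>j. p) = p"
    proof (rule probs_unique[OF assms(1) pp p], intro ballI)
      fix a assume a: "a \<in> L"
      have "cdfL L (psi (\<lambda>j. p)) a = FF (\<lambda>S. f S a) (\<lambda>j::'n. cdfL L p a)"
        using rep_FF[OF rep P a] by simp
      also have "\<dots> = cdfL L p a"
        by (rule FF_const) (use f01 a cdfL_ge0[OF p] cdfL_le1[OF p] in auto)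
      finally show "cdfL L (psi (\<lambda>j. p)) a = cdfL L p a" .
    qed
  qed
qed


end
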